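(* Let $(G,\precsim)$ be a compatible quasi-ordered abelian group and let $H$ be a subgroup of $G$ which is convex with respect to $\precsim$. Then either $H\subseteq G^o$ or $G^o\subseteq H$; and if $G^o\subseteq H$, then $H$ is an initial segment of $G$.
   Context: A compatible quasi-ordered abelian group is an abelian group $G$ with a total quasi-order $\precsim$ (reflexive, transitive, any two elements comparable) such that, writing $a\sim b$ for $a\precsim b\wedge b\precsim a$: $(Q_1)$ $x\sim0\Rightarrow x=0$; $(Q_2)$ $x\precsim y\wedge y\not\sim z\Rightarrow x+z\precsim y+z$, for all $x,y,z$. With $cl(g)$ the $\sim$-class of $g$, $g$ is o-type if $cl(g)=\{g\}$ and $g$ is not of order $2$; $G^o$ is the set of o-type elements. $S$ is convex if $s,t\in S$, $s\precsim a\precsim t$ imply $a\in S$; $S$ is an initial segment if $s\in S$, $a\precsim s$ imply $a\in S$. *)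

theory Defs
  imports Main
begin

definition qequiv :: "('a \<Rightarrow> 'a \<Rightarrow> bool) \<Rightarrow> 'a \<Rightarrow> 'a \<Rightarrow> bool" where
  "qequiv le a b \<longleftrightarrow> le a b \<and> le b a"

definition compatible_qo_group :: "('a::ab_group_add \<Rightarrow> 'a \<Rightarrow> bool) \<Rightarrow> bool" where
  "compatible_qo_group le \<longleftrightarrow>
     (\<forall>x. le x x) \<and>
     (\<forall>x y z. le x y \<longrightarrow> le y z \<longrightarrow> le x z) \<and>
     (\<forall>x y. le x y \<or> le y x) \<and>
     (\<forall>x. qequiv le x 0 \<longrightarrow> x = 0) \<and>
     (\<forall>x y z. le x y \<and> \<not> qequiv le y z \<longrightarrow> le (x + z) (y + z))"

definition qclass :: "('a \<Rightarrow> 'a \<Rightarrow> bool) \<Rightarrow> 'a \<Rightarrow> 'a set" where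
  "qclass le g = {a. qequiv le a g}"

definition has_order_two :: "'a::ab_group_add \<Rightarrow> bool" where
  "has_order_two g \<longleftrightarrow> g \<noteq> 0 \<and> g + g = 0"

definition o_type :: "('a::ab_group_add \<Rightarrow> 'a \<Rightarrow> bool) \<Rightarrow> 'a \<Rightarrow> bool" where
  "o_type le g \<longleftrightarrow> qclass le g = {g} \<and> \<not> has_order_two g"

definition o_part :: "('a::ab_group_add \<Rightarrow> 'a \<Rightarrow> bool) \<Rightarrow> 'a set" where
  "o_part le = {g. o_type le g}"

definition is_subgroup :: "'a::ab_group_add set \<Rightarrow> bool" where
  "is_subgroup H \<longleftrightarrow> 0 \<in> H \<and> (\<forall>x\<in>H. \<forall>y\<in>H. x + y \<in> H) \<and> (\<forall>x\<in>H. - x \<in> H)"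

definition qconvex :: "('a \<Rightarrow> 'a \<Rightarrow> bool) \<Rightarrow> 'a set \<Rightarrow> bool" where
  "qconvex le S \<longleftrightarrow> (\<forall>s\<in>S. \<forall>t\<in>S. \<forall>a. le s a \<and> le a t \<longrightarrow> a \<in> S)"

definition initial_segment :: "('a \<Rightarrow> 'a \<Rightarrow> bool) \<Rightarrow> 'a set \<Rightarrow> bool" where
  "initial_segment le S \<longleftrightarrow> (\<forall>s\<in>S. \<forall>a. le a s \<longrightarrow> a \<in> S)"

end

theory Submission
  imports Defs
begin

lemma cq_facts:
  assumes "compatible_qo_group le"
  shows "\<And>x. le x x" "\<And>x y z. le x y \<Longrightarrow> le y z \<Longrightarrow> le x z"
    "\<And>x y. le x y \<or> le y x" "\<And>x. le x 0 \<Longrightarrow> le 0 x \<Longrightarrow> x = 0"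
    "\<And>x y z. le x y \<Longrightarrow> \<not> (le y z \<and> le z y) \<Longrightarrow> le (x + z) (y + z)"
  using assms unfolding compatible_qo_group_def qequiv_def by blast+

lemma otype_char:
  assumes c: "compatible_qo_group le"
  shows "o_type le g \<longleftrightarrow> g = 0 \<or> \<not> (le g (-g) \<and> le (-g) g)"
proof
  assume o: "o_type le g"
  show "g = 0 \<or> \<not> (le g (-g) \<and> le (-g) g)"
  proof (rule ccontr)
    assume "\<not> ?thesis"
    then have "g \<noteq> 0" "le g (-g)" "le (-g) g" by auto
    then have "-g \<in> qclass le g" unfolding qclass_def qequiv_def by auto
    then have "-g = g" using o unfolding o_type_def by auto
    then have "g + g = 0" by (metis add.right_inverse)
    then show False using o \<open>g \<noteq> 0\<close> unfolding o_type_def has_order_two_def by auto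
  qed
next
  note f = cq_facts[OF c]
  assume h: "g = 0 \<or> \<not> (le g (-g) \<and> le (-g) g)"
  have cl: "qclass le g = {g}"
  proof
    show "{g} \<subseteq> qclass le g" using f(1) unfolding qclass_def qequiv_def by auto
    show "qclass le g \<subseteq> {g}"
    proof
      fix a assume "a \<in> qclass le g"
      then have a: "le a g" "le g a" unfolding qclass_def qequiv_def by auto
      show "a \<in> {g}"
      proof (cases "g = 0")
        case True then show ?thesis using a f(4) by auto
      next
        case False
        then have n: "\<not> (le g (-g) \<and> le (-g) g)" using h by auto
        have 1: "le (a + -g) (g + -g)" using f(5)[OF a(1) n] .
        have n2: "\<not> (le a (-g) \<and> le (-g) a)"
        proof
          assume "le a (-g) \<and> le (-g) a"
          then show False using n f(2)[OF a(2)] f(2)[OF _ a(1)] by blast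
        qed
        have 2: "le (g + -g) (a + -g)" using f(5)[OF a(2) n2] .
        have "a - g = 0" using 1 2 f(4)[of "a - g"] by simp
        then have "a + -g = 0" by simp
        then have "a = g" by (metis add.commute add_minus_cancel add_0_right)
        then show ?thesis by simp
      qed
    qed
  qed
  moreover have "\<not> has_order_two g"
  proof
    assume "has_order_two g"
    then have "g \<noteq> 0" "-g = g" unfolding has_order_two_def by (auto simp: add_eq_0_iff)
    then show False using h f(1) by auto
  qed
  ultimately show "o_type le g" unfolding o_type_def by auto
qed

lemma L1:
  assumes c: "compatible_qo_group le"
    and ho: "o_type le h" and gn: "\<not> o_type le g"
  shows "\<not> le g h"
proof
  note f = cq_facts[OF c]
  assume gh: "le g h"
  have g0: "g \<noteq> 0" and gg: "le g (-g)" "le (-g) g" using gn otype_char[OF c] by auto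
  have clh: "\<And>a. le a h \<Longrightarrow> le h a \<Longrightarrow> a = h" using ho unfolding o_type_def qclass_def qequiv_def by auto
  have nh2: "\<not> has_order_two h" using ho unfolding o_type_def by auto
  have 0: "le 0 g"
  proof (cases "le 0 g")
    case False
    then have "le g 0" using f(3) by blast
    have "\<not> (le 0 (-g) \<and> le (-g) 0)" using f(4)[of "-g"] g0 by auto
    then have "le (g + -g) (0 + -g)" using f(5)[OF \<open>le g 0\<close>] by blast
    then have "le 0 g" using f(2)[OF _ gg(2)] by simp
    then show ?thesis .
  qed
  have ngh: "\<not> (le g h \<and> le h g)"
  proof
    assume "le g h \<and> le h g"
    then have "g = h" using clh by auto
    then have "le (-h) h" "le h (-h)" using gg by auto
    then have "-h = h" using clh by blast
    then have "h + h = 0" by (metis add.right_inverse)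
    then show False using nh2 g0 \<open>g = h\<close> unfolding has_order_two_def by auto
  qed
  have ngh': "\<not> (le (-g) h \<and> le h (-g))"
  proof
    assume "le (-g) h \<and> le h (-g)"
    then have "le g h" "le h g" using f(2)[OF gg(1)] f(2)[OF _ gg(2)] by auto
    then show False using ngh by auto
  qed
  have A: "le (0 + h) (g + h)" using f(5)[OF 0 ngh] .
  have B1: "le (g + h) (-g + h)" using f(5)[OF gg(1) ngh'] .
  have B2: "le (-g + h) (g + h)" using f(5)[OF gg(2) ngh] .
  have nz: "\<not> (le (h + g) (-g) \<and> le (-g) (h + g))"
  proof
    assume "le (h + g) (-g) \<and> le (-g) (h + g)"
    then have "le (h+g) g" using f(2)[OF _ gg(2)] by blast
    then have "le h g" using f(2)[OF A] by (simp add: add.commute)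
    then show False using ngh gh by auto
  qed
  have C: "le (h + -g) (h + g + -g)" using f(5)[OF _ nz] A by (simp add: add.commute)
  have "le (h + g) h" using f(2)[OF B1] C by (simp add: add.commute)
  then have "h + g = h" using clh[of "h+g"] A by (simp add: add.commute)
  then show False using g0 by simp
qed

theorem mainTheorem8:
  fixes le :: "'a::ab_group_add \<Rightarrow> 'a \<Rightarrow> bool" and H :: "'a set"
  assumes "compatible_qo_group le"
    and "is_subgroup H"
    and "qconvex le H"
  shows "(H \<subseteq> o_part le \<or> o_part le \<subseteq> H) \<and>
         (o_part le \<subseteq> H \<longrightarrow> initial_segment le H)"
proof -
  note c = assms(1)
  note f = cq_facts[OF c]
  have H0: "0 \<in> H" and Hneg: "\<And>x. x \<in> H \<Longrightarrow> -x \<in> H" using assms(2) unfolding is_subgroup_def by auto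
  have cv: "\<And>s t a. s \<in> H \<Longrightarrow> t \<in> H \<Longrightarrow> le s a \<Longrightarrow> le a t \<Longrightarrow> a \<in> H"
    using assms(3) unfolding qconvex_def by blast
  have o0: "o_type le 0" using otype_char[OF c] by auto
  have onegI: "\<And>g. o_type le g \<Longrightarrow> o_type le (-g)" using otype_char[OF c] by fastforce
  have P1: "H \<subseteq> o_part le \<or> o_part le \<subseteq> H"
  proof (rule ccontr)
    assume "\<not> ?thesis"
    then obtain h g where h: "h \<in> H" "\<not> o_type le h" and g: "o_type le g" "g \<notin> H"
      unfolding o_part_def by auto
    show False
    proof (cases "le 0 g")
      case True
      have "le g h" using L1[OF c g(1) h(2)] f(3) by blast
      then show False using cv[OF H0 h(1) True] g by auto
    next
      case False
      then have "le g 0" using f(3) by blast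
      have "g \<noteq> 0" using g H0 by auto
      have "\<not> (le 0 (-g) \<and> le (-g) 0)" using f(4)[of "-g"] \<open>g \<noteq> 0\<close> by auto
      then have "le (g + -g) (0 + -g)" using f(5)[OF \<open>le g 0\<close>] by blast
      then have a: "le 0 (-g)" by simp
      have "le (-g) h" using L1[OF c onegI[OF g(1)] h(2)] f(3) by blast
      then have "-g \<in> H" using cv[OF H0 h(1) a] by auto
      then show False using Hneg g by fastforce
    qed
  qed
  have P2: "o_part le \<subseteq> H \<longrightarrow> initial_segment le H"
  proof
    assume sub: "o_part le \<subseteq> H"
    show "initial_segment le H" unfolding initial_segment_def
    proof (intro ballI allI impI)
      fix s a assume s: "s \<in> H" and as: "le a s"
      show "a \<in> H"
      proof (cases "o_type le a")
        case True then show ?thesis using sub unfolding o_part_def by auto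
      next
        case False
        have "le 0 a" using L1[OF c o0 False] f(3) by blast
        then show ?thesis using cv[OF H0 s _ as] by auto
      qed
    qed
  qed
  show ?thesis using P1 P2 by blast
qed

end
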